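(* Let $m \geq 1$ be an integer and let $q \in (m,m+1)$ be a Pisot number which is not an algebraic unit. Then every Galois conjugate $q'$ of $q$ satisfies $|q'| \geq \frac{2}{m+1} \geq c_m$.
   Context: A Pisot number is a real algebraic integer $q>1$ all of whose other Galois conjugates have absolute value strictly less than $1$. Define $c_1 = \frac{\sqrt{5}-1}{2}$; define $c_2$ to be the absolute value of the root of minimal modulus of $x^4-3x^3+x^2-2x-1$; and for $m \geq 3$ define $c_m = \frac{m+1-\sqrt{m^2+2m-3}}{2}$. *)

theory Defs
  imports "HOL-Analysis.Analysis" "HOL-Computational_Algebra.Computational_Algebra"
begin

text \<open>Galois conjugates of a complex algebraic number: the complex roots of its minimal
  polynomial over the rationals, i.e. of an irreducible rational polynomial vanishing at it.\<close>
definition galois_conjugates :: "complex \<Rightarrow> complex set" where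
  "galois_conjugates x = {z. \<exists>p :: rat poly. irreducible p \<and>
      poly (map_poly of_rat p) x = 0 \<and> poly (map_poly of_rat p) z = 0}"

definition pisot :: "real \<Rightarrow> bool" where
  "pisot q \<longleftrightarrow> q > 1 \<and> algebraic_int q \<and>
     (\<forall>z \<in> galois_conjugates (complex_of_real q). z \<noteq> complex_of_real q \<longrightarrow> norm z < 1)"

definition algebraic_unit :: "'a :: field \<Rightarrow> bool" where
  "algebraic_unit x \<longleftrightarrow> algebraic_int x \<and> x \<noteq> 0 \<and> algebraic_int (inverse x)"

definition c_const :: "nat \<Rightarrow> real" where
  "c_const m = (if m = 1 then (sqrt 5 - 1) / 2
     else if m = 2 then Min (norm ` {z :: complex. poly [:-1, -2, 1, -3, 1:] z = 0})
     else (real m + 1 - sqrt (real m ^ 2 + 2 * real m - 3)) / 2)"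

end

theory Submission
  imports Defs "Berlekamp_Zassenhaus.Factor_Bound"
begin

interpretation my_of_rat_poly_hom: map_poly_inj_idom_hom "of_rat :: rat \<Rightarrow> 'a :: field_char_0" ..

lemma common_root_dvd:
  fixes p A :: "rat poly" and z :: complex
  assumes irr: "irreducible p" and pz: "poly (map_poly of_rat p) z = 0"
    and Az: "poly (map_poly of_rat A) z = 0"
  shows "p dvd A"
proof (rule ccontr)
  assume nd: "\<not> p dvd A"
  have "prime_elem p" using irr by (rule field_poly_irreducible_imp_prime)
  from prime_elem_imp_coprime[OF this nd] have g: "gcd p A = 1"
    using coprime_iff_gcd_eq_1 by blast
  obtain x y where "bezout_coefficients p A = (x, y)" by force
  from bezout_coefficients[OF this] g have e: "x * p + y * A = 1" by simp
  have "poly (map_poly of_rat (x * p + y * A)) z = (0::complex)"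
    by (simp add: hom_distribs pz Az)
  with e show False by simp
qed

lemma dvd_root:
  fixes p A :: "rat poly" and z :: complex
  assumes "p dvd A" "poly (map_poly of_rat p) z = 0"
  shows "poly (map_poly of_rat A) z = 0"
proof -
  from assms(1) obtain k where "A = p * k" by (rule dvdE)
  thus ?thesis using assms(2) by (simp add: hom_distribs)
qed

lemma int_poly_real_complex:
  fixes g :: "int poly"
  shows "poly (map_poly of_int g) (complex_of_real x) = complex_of_real (poly (map_poly of_int g) x)"
  by (induction g) (auto simp: map_poly_pCons)

lemma core:
  fixes q :: real and p :: "rat poly" and z0 :: complex
  assumes q1: "q > 1" and ai: "algebraic_int q" and nu: "\<not> algebraic_unit q"
    and conj: "\<forall>z \<in> galois_conjugates (complex_of_real q). z \<noteq> complex_of_real q \<longrightarrow> norm z < 1"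
    and irr: "irreducible p" and pQ: "poly (map_poly of_rat p) (complex_of_real q) = 0"
    and pz0: "poly (map_poly of_rat p) z0 = 0" and z0Q: "z0 \<noteq> complex_of_real q"
  shows "2 \<le> q * norm z0"
proof -
  define Q where "Q = complex_of_real q"
  define P where "P = (map_poly of_rat p :: complex poly)"
  have PQ: "poly P Q = 0" using pQ by (simp add: P_def Q_def)
  have Q0: "Q \<noteq> 0" using q1 by (simp add: Q_def)
  have "algebraic_int Q" using ai by (simp add: Q_def)
  then obtain f :: "int poly" where f: "poly (map_poly of_int f) Q = 0" "lead_coeff f = 1"
    by (auto simp: algebraic_int_altdef_ipoly)
  define F where "F = (map_poly of_int f :: rat poly)"
  have mapF: "map_poly (of_rat :: rat \<Rightarrow> complex) F = map_poly of_int f"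
    by (simp add: F_def map_poly_map_poly o_def)
  have "p dvd F"
    by (rule common_root_dvd[OF irr pQ]) (use f mapF in \<open>simp add: Q_def\<close>)
  then obtain R where FR: "F = p * R" by (rule dvdE)
  have f0: "f \<noteq> 0" using f(2) by auto
  have cf: "content f = 1"
  proof -
    have "content f dvd 1" using content_dvd_coeff[of f "degree f"] f(2) by simp
    thus ?thesis using content_ge_0_int[of f] by simp
  qed
  obtain r g where rg: "rat_to_normalized_int_poly p = (r, g)" by force
  obtain s h where sh: "rat_to_normalized_int_poly R = (s, h)" by force
  have fgh: "f = g * h"
    by (rule rat_to_int_factor_content_1[OF cf _ rg sh f0]) (use FR F_def in simp)
  have pr: "p = Polynomial.smult r (map_poly of_int g)" and r0: "r > 0"
    using rat_to_normalized_int_poly[OF rg] by auto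
  have lg: "lead_coeff g = 1 \<or> lead_coeff g = -1"
    using f(2) unfolding fgh lead_coeff_mult by (auto simp: zmult_eq_1_iff)
  define G where "G = (map_poly of_int g :: complex poly)"
  have PG: "P = Polynomial.smult (of_rat r) G"
    by (simp add: P_def G_def pr hom_distribs map_poly_map_poly o_def)
  have rootPG: "poly P z = 0 \<longleftrightarrow> poly G z = 0" for z
    using r0 by (simp add: PG)

  have p0: "p \<noteq> 0" using irr by auto
  have degp: "degree p \<noteq> 0"
  proof
    assume "degree p = 0"
    then obtain a where "p = [:a:]" by (rule degree_eq_zeroE)
    with p0 PQ show False by (auto simp: P_def)
  qed
  define c where "c = Polynomial.coeff g 0"
  have Gc: "poly G 0 = of_int c" by (simp add: G_def c_def poly_0_coeff_0 coeff_map_poly)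
  have GQ: "poly G Q = 0" using rootPG PQ by simp
  have c0: "c \<noteq> 0"
  proof
    assume "c = 0"
    hence "poly P 0 = 0" using Gc rootPG by simp
    hence "p dvd [:0, 1:]"
      by (intro common_root_dvd[OF irr, of 0]) (auto simp: P_def)
    from dvd_root[OF this pQ] have "Q = 0" by (simp add: Q_def)
    with Q0 show False by simp
  qed
  have c1: "\<bar>c\<bar> \<noteq> 1"
  proof
    assume a: "\<bar>c\<bar> = 1"
    have cc: "c * c = 1"
    proof -
      have "c * c = \<bar>c\<bar> * \<bar>c\<bar>" by (rule abs_mult_self_eq[symmetric])
      thus ?thesis using a by simp
    qed
    have gq0: "complex_of_real (poly (map_poly real_of_int g) q) = 0"
      using GQ unfolding G_def Q_def int_poly_real_complex .
    hence gq: "poly (map_poly real_of_int g) q = 0" by simp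
    define g2 where "g2 = (map_poly real_of_int (Polynomial.smult c g))"
    have g2e: "g2 = Polynomial.smult (real_of_int c) (map_poly real_of_int g)"
      unfolding g2_def by (rule poly_eqI) (simp add: coeff_map_poly)
    have "algebraic_int (inverse q)"
    proof (rule algebraic_int_inverse[of g2])
      show "poly g2 q = 0"
        using gq by (simp add: g2e)
      show "\<forall>i. Polynomial.coeff g2 i \<in> \<int>"
        by (simp add: g2_def coeff_map_poly)
      have "Polynomial.coeff g2 0 = real_of_int (c * c)"
        by (simp add: g2_def coeff_map_poly c_def)
      thus "Polynomial.coeff g2 0 = 1" using cc by simp
    qed
    moreover have "q \<noteq> 0" using q1 by simp
    ultimately have "algebraic_unit q" using ai unfolding algebraic_unit_def by blast
    with nu show False by contradiction
  qed
  have c2: "2 \<le> \<bar>c\<bar>" using c0 c1 by linarith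
  have "[:-Q, 1:] dvd G" using GQ dvd_iff_poly_eq_0[of "-Q" G] by simp
  then obtain H where GH: "G = [:-Q, 1:] * H" by (rule dvdE)
  have HQ: "poly H Q \<noteq> 0"
  proof
    assume "poly H Q = 0"
    hence "[:-Q, 1:] dvd H" using dvd_iff_poly_eq_0[of "-Q" H] by simp
    then obtain K1 where HK: "H = [:-Q, 1:] * K1" by (rule dvdE)
    have e: "poly [:-Q, 1:] Q = 0" by simp
    have "poly (pderiv G) Q = 0"
      unfolding GH HK pderiv_mult poly_add poly_mult e by simp
    hence "poly (map_poly of_rat (pderiv p)) Q = 0"
      by (simp add: hom_distribs P_def[symmetric] PG pderiv_smult)
    hence "p dvd pderiv p"
      by (intro common_root_dvd[OF irr pQ]) (simp add: Q_def)
    moreover have "pderiv p \<noteq> 0" using degp by (simp add: pderiv_eq_0_iff)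
    ultimately have "degree p \<le> degree (pderiv p)" by (rule dvd_imp_degree_le)
    with degp show False by (simp add: degree_pderiv)
  qed
  have "poly G z0 = 0" using rootPG pz0 by (simp add: P_def)
  hence "poly H z0 = 0" using z0Q by (simp add: GH Q_def)
  hence "[:-z0, 1:] dvd H" using dvd_iff_poly_eq_0[of "-z0" H] by simp
  then obtain K where HK: "H = [:-z0, 1:] * K" by (rule dvdE)
  have g0: "g \<noteq> 0" using f0 fgh by auto
  have G0: "G \<noteq> 0" using g0 by (simp add: G_def)
  have K0: "K \<noteq> 0" using G0 GH HK by auto
  have "lead_coeff G = of_int (lead_coeff g)"
    by (simp add: G_def)
  moreover have "lead_coeff G = lead_coeff K"
    unfolding GH HK lead_coeff_mult by simp
  ultimately have nlK: "norm (lead_coeff K) = 1"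
    using lg by auto
  have KQ: "poly K Q \<noteq> 0" using HQ by (simp add: HK)
  obtain rt where rt: "Polynomial.smult (lead_coeff K) (\<Prod>i<degree K. [:-rt i, 1:]) = K"
    by (rule complex_poly_decompose')
  have rtK: "poly K (rt i) = 0" if "i < degree K" for i
  proof -
    have "poly K (rt i) = lead_coeff K * (\<Prod>j<degree K. poly [:-rt j, 1:] (rt i))"
      by (subst rt[symmetric]) (simp add: poly_prod)
    also have "(\<Prod>j<degree K. poly [:-rt j, 1:] (rt i)) = 0"
      using that by (intro prod_zero) auto
    finally show ?thesis by simp
  qed
  have rtn: "norm (rt i) < 1" if "i < degree K" for i
  proof -
    have "poly G (rt i) = 0" using rtK[OF that] by (simp add: GH HK)
    hence "poly P (rt i) = 0" using rootPG by simp
    moreover have "rt i \<noteq> Q" using rtK[OF that] KQ by auto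
    ultimately have "rt i \<in> galois_conjugates (complex_of_real q)"
      using irr pQ unfolding galois_conjugates_def P_def by blast
    thus ?thesis using conj \<open>rt i \<noteq> Q\<close> by (auto simp: Q_def)
  qed
  have "poly K 0 = lead_coeff K * (\<Prod>j<degree K. - rt j)"
    by (subst rt[symmetric]) (simp add: poly_prod)
  hence "norm (poly K 0) = (\<Prod>j<degree K. norm (rt j))"
    using nlK by (simp add: norm_mult flip: prod_norm)
  also have "\<dots> \<le> 1"
    by (rule prod_le_1) (use rtn in \<open>auto simp: less_imp_le\<close>)
  finally have nK: "norm (poly K 0) \<le> 1" .
  have "of_int c = poly G 0" using Gc by simp
  also have "\<dots> = Q * z0 * poly K 0" by (simp add: GH HK)
  finally have "norm (of_int c :: complex) = q * norm z0 * norm (poly K 0)"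
    using q1 by (simp add: Q_def norm_mult)
  hence "\<bar>c\<bar> = q * norm z0 * norm (poly K 0)" by simp
  also have "\<dots> \<le> q * norm z0 * 1"
    using q1 nK by (intro mult_left_mono) auto
  finally show ?thesis using c2 by simp
qed

lemma c_const_bound:
  fixes m :: nat
  assumes "m \<ge> 1"
  shows "c_const m \<le> 2 / (real m + 1)"
proof -
  consider "m = 1" | "m = 2" | "m \<ge> 3" using assms by linarith
  then show ?thesis
  proof cases
    case 1
    have "sqrt 5 \<le> 3"
      by (rule real_le_lsqrt) auto
    thus ?thesis using 1 by (simp add: c_const_def)
  next
    case 2
    define pp :: "real poly" where "pp = [:-1, -2, 1, -3, 1:]"
    have "\<exists>x. -1/2 < x \<and> x < 0 \<and> poly pp x = 0"
      by (rule poly_IVT_neg) (auto simp: pp_def)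
    then obtain x :: real where x: "-1/2 < x" "x < 0" "poly pp x = 0" by blast
    define S where "S = {z :: complex. poly [:-1, -2, 1, -3, 1:] z = 0}"
    have xS: "complex_of_real x \<in> S"
    proof -
      have "poly [:-1, -2, 1, -3, 1:] (complex_of_real x) = complex_of_real (poly pp x)"
        by (simp add: pp_def)
      thus ?thesis using x(3) by (simp add: S_def)
    qed
    have finS: "finite S" unfolding S_def
      by (rule poly_roots_finite) simp
    have "Min (norm ` S) \<le> norm (complex_of_real x)"
      by (rule Min_le[OF finite_imageI[OF finS] imageI[OF xS]])
    also have "\<dots> = \<bar>x\<bar>" by simp
    also have "\<dots> \<le> 2 / 3" using x by simp
    finally show ?thesis using 2 by (simp add: c_const_def S_def)
  next
    case 3
    define D where "D = real m ^ 2 + 2 * real m - 3"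
    define s where "s = sqrt D"
    have m3: "real m \<ge> 3" using 3 by simp
    have De: "D = real m * real m + 2 * real m - 3" by (simp add: D_def power2_eq_square)
    have "real m * real m \<ge> 0" by simp
    hence D0: "D \<ge> 0" using m3 De by linarith
    have s0: "s \<ge> 0" using D0 by (simp add: s_def)
    have s2: "s ^ 2 = D" using D0 by (simp add: s_def)
    have Dle: "D \<le> (real m + 1)\<^sup>2" by (simp add: D_def power2_eq_square algebra_simps)
    have "s \<le> sqrt ((real m + 1)\<^sup>2)" unfolding s_def using Dle by (rule real_sqrt_le_mono)
    hence sle: "s \<le> real m + 1" by simp
    have "(real m + 1 - s) * (real m + 1) \<le> 4"
    proof -
      have "(real m + 1)^2 - 4 = s ^ 2" using s2 by (simp add: D_def power2_eq_square algebra_simps)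
      also have "\<dots> \<le> s * (real m + 1)" using sle s0 by (simp add: power2_eq_square mult_left_mono)
      finally show ?thesis by (simp add: power2_eq_square algebra_simps)
    qed
    hence "(real m + 1 - s) / 2 \<le> 2 / (real m + 1)"
      by (simp add: field_simps)
    thus ?thesis using 3 by (simp add: c_const_def D_def s_def)
  qed
qed

theorem theorem2p3:
  fixes m :: nat and q :: real
  assumes "m \<ge> 1"
    and "real m < q" and "q < real m + 1"
    and "pisot q"
    and "\<not> algebraic_unit q"
  shows "\<forall>q' \<in> galois_conjugates (complex_of_real q).
           norm q' \<ge> 2 / (real m + 1) \<and> 2 / (real m + 1) \<ge> c_const m"
proof
  fix q' assume q': "q' \<in> galois_conjugates (complex_of_real q)"
  have q1: "q > 1" and ai: "algebraic_int q"
    and conj: "\<forall>z \<in> galois_conjugates (complex_of_real q). z \<noteq> complex_of_real q \<longrightarrow> norm z < 1"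
    using assms(4) by (auto simp: pisot_def)
  have m1: "real m \<ge> 1" using assms(1) by simp
  have le1: "2 / (real m + 1) \<le> 1" using m1 by (simp add: field_simps)
  have "norm q' \<ge> 2 / (real m + 1)"
  proof (cases "q' = complex_of_real q")
    case True
    hence "norm q' = q" using q1 by simp
    thus ?thesis using le1 q1 by linarith
  next
    case False
    from q' obtain p :: "rat poly" where p: "irreducible p"
      "poly (map_poly of_rat p) (complex_of_real q) = 0" "poly (map_poly of_rat p) q' = 0"
      unfolding galois_conjugates_def by blast
    have "2 \<le> q * norm q'"
      by (rule core[OF q1 ai assms(5) conj p False])
    hence "2 / q \<le> norm q'" using q1 by (simp add: field_simps)
    moreover have "2 / (real m + 1) \<le> 2 / q"
      using assms(3) q1 by (intro divide_left_mono) auto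
    ultimately show ?thesis by linarith
  qed
  thus "norm q' \<ge> 2 / (real m + 1) \<and> 2 / (real m + 1) \<ge> c_const m"
    using c_const_bound[OF assms(1)] by simp
qed

end
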